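(* Let $\mathcal{X}$ be a connected $n$-premaniplex with base flag $x_0$ and $N=\operatorname{Stab}_{\mathcal{C}^n}(x_0)$, and let $(\mathcal{Y},\eta)$ be an $(n,m)$-voltage operator that preserves connectivity, with base flag $y_0$ of $\mathcal{Y}$, $L=\operatorname{Stab}_{\mathcal{C}^m}(y_0)$ and $\zeta:L\to\mathcal{C}^n$, $\zeta(\omega)=\eta(W_\omega(y_0))$. If $\upsilon\in\operatorname{N}_{\mathcal{C}^m}(\zeta^{-1}(N))\setminus L$, then $\mathcal{X}$ covers the premaniplex $\mathcal{Z}_\upsilon=\mathcal{C}^n/\zeta(L\cap L^\upsilon)$.
   Context: An $n$-premaniplex is an edge-coloured graph (semi-edges and parallel edges allowed) with colours $\{0,\dots,n-1\}$ such that every vertex (flag) is the start of exactly one dart of each colour, and for $|i-j|\ge2$ alternating $i,j$-paths of length 4 are closed; $x^i$ is the $i$-adjacent flag of $x$. $\mathcal{C}^n=\langle r_0,\dots,r_{n-1}\mid r_i^2,\ (r_ir_j)^2\ (|i-j|\ge2)\rangle$ acts on the left on flags by $r_ix=x^i$. A covering is a surjective map of flags preserving $i$-adjacency for all $i$. $L^\upsilon=\upsilon^{-1}L\upsilon$. For a subgroup $K\le\mathcal{C}^n$, the coset premaniplex $\mathcal{C}^n/K$ has flags the left cosets $\omega K$ with $(\omega K)^i=r_i\omega K$. For a flag $y$ of an $m$-premaniplex $\mathcal{Y}$ and $\omega\in\mathcal{C}^m$, $W_\omega(y)$ is the homotopy class of paths from $y$ whose colour sequence $i_1,\dots,i_k$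 satisfies $r_{i_k}\cdots r_{i_1}=\omega$; these form the fundamental groupoid $\Pi(\mathcal{Y})$. A voltage assignment $\eta:\Pi(\mathcal{Y})\to\mathcal{C}^n$ satisfies $\eta(W_1W_2)=\eta(W_2)\eta(W_1)$; $(\mathcal{Y},\eta)$ is an $(n,m)$-voltage operator. $\mathcal{X}\rtimes_\eta\mathcal{Y}$ has flags $\mathcal{X}\times\mathcal{Y}$ and $(x,y)^i=(\eta(W_{r_i}(y))x,r_iy)$, $i\in\{0,\dots,m-1\}$. The operator preserves connectivity if $\mathcal{X}\rtimes_\eta\mathcal{Y}$ is connected whenever $\mathcal{X}$ is. *)

theory Defs
  imports "HOL-Algebra.Group_Action"
begin

text \<open>A word [a1,...,ak] over the alphabet {0..<n} represents the product r_a1 r_a2 ... r_ak.\<close>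

inductive cox_eq :: "nat \<Rightarrow> nat list \<Rightarrow> nat list \<Rightarrow> bool" for n where
  refl: "set w \<subseteq> {..<n} \<Longrightarrow> cox_eq n w w"
| sym: "cox_eq n u v \<Longrightarrow> cox_eq n v u"
| trans: "cox_eq n u v \<Longrightarrow> cox_eq n v w \<Longrightarrow> cox_eq n u w"
| cancel: "set u \<subseteq> {..<n} \<Longrightarrow> set v \<subseteq> {..<n} \<Longrightarrow> i < n \<Longrightarrow>
           cox_eq n (u @ [i, i] @ v) (u @ v)"
| comm: "set u \<subseteq> {..<n} \<Longrightarrow> set v \<subseteq> {..<n} \<Longrightarrow> i < n \<Longrightarrow> j < n \<Longrightarrow>
           (i + 2 \<le> j \<or> j + 2 \<le> i) \<Longrightarrow> cox_eq n (u @ [i, j] @ v) (u @ [j, i] @ v)"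

definition cox_class :: "nat \<Rightarrow> nat list \<Rightarrow> nat list set" where
  "cox_class n w = {v. cox_eq n w v}"

definition cox_group :: "nat \<Rightarrow> nat list set monoid" where
  "cox_group n = \<lparr> carrier = {cox_class n w | w. set w \<subseteq> {..<n}},
                   mult = (\<lambda>A B. {v. \<exists>a\<in>A. \<exists>b\<in>B. cox_eq n (a @ b) v}),
                   one = cox_class n [] \<rparr>"

definition cox_gen :: "nat \<Rightarrow> nat \<Rightarrow> nat list set" where
  "cox_gen n i = cox_class n [i]"

text \<open>An n-premaniplex: flag set F, adj i x = x^i (i-adjacent flag; fixed points are semi-edges).\<close>
definition premaniplex :: "nat \<Rightarrow> 'a set \<Rightarrow> (nat \<Rightarrow> 'a \<Rightarrow> 'a) \<Rightarrow> bool" where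
  "premaniplex n F adj \<longleftrightarrow>
     (\<forall>i<n. \<forall>x\<in>F. adj i x \<in> F \<and> adj i (adj i x) = x) \<and>
     (\<forall>i<n. \<forall>j<n. (i + 2 \<le> j \<or> j + 2 \<le> i) \<longrightarrow>
        (\<forall>x\<in>F. adj i (adj j (adj i (adj j x))) = x))"

definition wact :: "(nat \<Rightarrow> 'a \<Rightarrow> 'a) \<Rightarrow> nat list \<Rightarrow> 'a \<Rightarrow> 'a" where
  "wact adj w x = foldr adj w x"

text \<open>Left action of an element of C^n (well defined on premaniplexes).\<close>
definition cact :: "(nat \<Rightarrow> 'a \<Rightarrow> 'a) \<Rightarrow> nat list set \<Rightarrow> 'a \<Rightarrow> 'a" where
  "cact adj g x = wact adj (SOME w. w \<in> g) x"

definition pm_connected :: "nat \<Rightarrow> 'a set \<Rightarrow> (nat \<Rightarrow> 'a \<Rightarrow> 'a) \<Rightarrow> bool" where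
  "pm_connected n F adj \<longleftrightarrow>
     (\<forall>x\<in>F. \<forall>y\<in>F. \<exists>w. set w \<subseteq> {..<n} \<and> wact adj w x = y)"

definition stab :: "nat \<Rightarrow> (nat \<Rightarrow> 'a \<Rightarrow> 'a) \<Rightarrow> 'a \<Rightarrow> nat list set set" where
  "stab n adj x0 = {g \<in> carrier (cox_group n). cact adj g x0 = x0}"

definition covers :: "nat \<Rightarrow> 'a set \<Rightarrow> (nat \<Rightarrow> 'a \<Rightarrow> 'a) \<Rightarrow> 'b set \<Rightarrow> (nat \<Rightarrow> 'b \<Rightarrow> 'b) \<Rightarrow> bool" where
  "covers n F1 adj1 F2 adj2 \<longleftrightarrow>
     (\<exists>\<phi>. \<phi> ` F1 = F2 \<and> (\<forall>x\<in>F1. \<forall>i<n. \<phi> (adj1 i x) = adj2 i (\<phi> x)))"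

definition coset_flags :: "nat \<Rightarrow> nat list set set \<Rightarrow> nat list set set set" where
  "coset_flags n K = {\<omega> <#\<^bsub>cox_group n\<^esub> K | \<omega>. \<omega> \<in> carrier (cox_group n)}"

definition coset_adj :: "nat \<Rightarrow> nat \<Rightarrow> nat list set set \<Rightarrow> nat list set set" where
  "coset_adj n i C = cox_gen n i <#\<^bsub>cox_group n\<^esub> C"

text \<open>The fundamental groupoid: the class W_\<omega>(y) is represented by the pair (y, \<omega>);
  its end flag is \<omega> y, and W_\<omega>(y) followed by W_\<omega>'(\<omega> y) is W_(\<omega>'\<omega>)(y).
  A voltage assignment eta y \<omega> = \<eta>(W_\<omega>(y)) satisfies \<eta>(W1 W2) = \<eta>(W2) \<eta>(W1).\<close>
definition voltage_assignment ::
  "nat \<Rightarrow> nat \<Rightarrow> 'y set \<Rightarrow> (nat \<Rightarrow> 'y \<Rightarrow> 'y) \<Rightarrow> ('y \<Rightarrow> nat list set \<Rightarrow> nat list set) \<Rightarrow> bool" where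
  "voltage_assignment n m FY adjY eta \<longleftrightarrow>
     (\<forall>y\<in>FY. \<forall>\<omega>\<in>carrier (cox_group m). eta y \<omega> \<in> carrier (cox_group n)) \<and>
     (\<forall>y\<in>FY. \<forall>\<omega>\<in>carrier (cox_group m). \<forall>\<omega>'\<in>carrier (cox_group m).
        eta y (\<omega>' \<otimes>\<^bsub>cox_group m\<^esub> \<omega>) =
        eta (cact adjY \<omega> y) \<omega>' \<otimes>\<^bsub>cox_group n\<^esub> eta y \<omega>)"

definition vo_adj ::
  "nat \<Rightarrow> (nat \<Rightarrow> 'x \<Rightarrow> 'x) \<Rightarrow> (nat \<Rightarrow> 'y \<Rightarrow> 'y) \<Rightarrow> ('y \<Rightarrow> nat list set \<Rightarrow> nat list set)
   \<Rightarrow> nat \<Rightarrow> 'x \<times> 'y \<Rightarrow> 'x \<times> 'y" where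
  "vo_adj m adjX adjY eta i p = (cact adjX (eta (snd p) (cox_gen m i)) (fst p), adjY i (snd p))"

text \<open>Preserving connectivity. Every connected premaniplex is countable (C^n is countable),
  so quantifying over premaniplexes with flags in nat covers all of them up to isomorphism.\<close>
definition preserves_connectivity ::
  "nat \<Rightarrow> nat \<Rightarrow> 'y set \<Rightarrow> (nat \<Rightarrow> 'y \<Rightarrow> 'y) \<Rightarrow> ('y \<Rightarrow> nat list set \<Rightarrow> nat list set) \<Rightarrow> bool" where
  "preserves_connectivity n m FY adjY eta \<longleftrightarrow>
     (\<forall>(FX :: nat set) adjX. premaniplex n FX adjX \<and> pm_connected n FX adjX \<longrightarrow>
        pm_connected m (FX \<times> FY) (vo_adj m adjX adjY eta))"

definition conj_sub :: "('a, 'b) monoid_scheme \<Rightarrow> 'a set \<Rightarrow> 'a \<Rightarrow> 'a set" where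
  "conj_sub G L u = {inv\<^bsub>G\<^esub> u \<otimes>\<^bsub>G\<^esub> l \<otimes>\<^bsub>G\<^esub> u | l. l \<in> L}"

end

theory Submission
  imports Defs "HOL-Library.Countable"
begin


abbreviation valid :: "nat \<Rightarrow> nat list \<Rightarrow> bool" where "valid n w \<equiv> set w \<subseteq> {..<n}"

lemma cox_eq_valid: "cox_eq n u v \<Longrightarrow> valid n u \<and> valid n v"
  by (induction rule: cox_eq.induct) auto

lemma cox_eq_left: "cox_eq n u v \<Longrightarrow> valid n a \<Longrightarrow> cox_eq n (a @ u) (a @ v)"
proof (induction rule: cox_eq.induct)
  case (refl w) then show ?case by (intro cox_eq.refl) auto
next
  case (sym u v) then show ?case by (auto intro: cox_eq.sym)
next
  case (trans u v w) then show ?case by (auto intro: cox_eq.trans)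
next
  case (cancel u v i) then show ?case using cox_eq.cancel[where n=n and u="a@u" and v=v and i=i] by auto
next
  case (comm u v i j) then show ?case using cox_eq.comm[where n=n and u="a@u" and v=v and i=i and j=j] by auto
qed

lemma cox_eq_right: "cox_eq n u v \<Longrightarrow> valid n a \<Longrightarrow> cox_eq n (u @ a) (v @ a)"
proof (induction rule: cox_eq.induct)
  case (refl w) then show ?case by (intro cox_eq.refl) auto
next
  case (sym u v) then show ?case by (auto intro: cox_eq.sym)
next
  case (trans u v w) then show ?case by (auto intro: cox_eq.trans)
next
  case (cancel u v i) then show ?case using cox_eq.cancel[where n=n and u="u" and v="v@a" and i=i] by auto
next
  case (comm u v i j) then show ?case using cox_eq.comm[where n=n and u="u" and v="v@a" and i=i and j=j] by auto
qed

lemma cox_eq_app: "cox_eq n u u' \<Longrightarrow> cox_eq n v v' \<Longrightarrow> cox_eq n (u @ v) (u' @ v')"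
  by (meson cox_eq.trans cox_eq_left cox_eq_right cox_eq_valid)

lemma cox_eq_rev: "valid n w \<Longrightarrow> cox_eq n (w @ rev w) []"
proof (induction w)
  case Nil then show ?case by (auto intro: cox_eq.refl)
next
  case (Cons i w)
  have i: "i < n" using Cons by auto
  have "cox_eq n ([i] @ (w @ rev w) @ [i]) ([i] @ [] @ [i])"
    using Cons i by (intro cox_eq_left cox_eq_right) auto
  moreover have "cox_eq n ([] @ [i,i] @ []) ([] @ [])" using i by (intro cox_eq.cancel) auto
  ultimately show ?case by (auto intro: cox_eq.trans)
qed

lemma cox_eq_rev': "valid n w \<Longrightarrow> cox_eq n (rev w @ w) []"
  using cox_eq_rev[where n=n and w="rev w"] by simp

lemma cox_class_self: "valid n w \<Longrightarrow> w \<in> cox_class n w"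
  by (simp add: cox_class_def cox_eq.refl)

lemma cox_class_eq: "cox_eq n u v \<Longrightarrow> cox_class n u = cox_class n v"
  unfolding cox_class_def by (auto intro: cox_eq.trans cox_eq.sym)

lemma cox_class_eq_iff: "valid n u \<Longrightarrow> cox_class n u = cox_class n v \<longleftrightarrow> cox_eq n u v"
proof
  assume u: "valid n u" and e: "cox_class n u = cox_class n v"
  have "u \<in> cox_class n v" using e cox_class_self[OF u] by simp
  then show "cox_eq n u v" unfolding cox_class_def by (simp add: cox_eq.sym)
qed (rule cox_class_eq)

lemma carrier_cox: "g \<in> carrier (cox_group n) \<longleftrightarrow> (\<exists>w. valid n w \<and> g = cox_class n w)"
  by (auto simp: cox_group_def)

lemma class_in_carrier[simp]: "valid n w \<Longrightarrow> cox_class n w \<in> carrier (cox_group n)"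
  by (auto simp: cox_group_def)

lemma mult_class: "valid n a \<Longrightarrow> valid n b \<Longrightarrow>
  cox_class n a \<otimes>\<^bsub>cox_group n\<^esub> cox_class n b = cox_class n (a @ b)"
proof -
  assume a: "valid n a" and b: "valid n b"
  have "v \<in> {v. \<exists>a'\<in>cox_class n a. \<exists>b'\<in>cox_class n b. cox_eq n (a' @ b') v} \<longleftrightarrow> v \<in> cox_class n (a @ b)" for v
  proof
    assume "v \<in> {v. \<exists>a'\<in>cox_class n a. \<exists>b'\<in>cox_class n b. cox_eq n (a' @ b') v}"
    then obtain a' b' where "cox_eq n a a'" "cox_eq n b b'" "cox_eq n (a' @ b') v"
      unfolding cox_class_def by blast
    then show "v \<in> cox_class n (a @ b)" unfolding cox_class_def
      using cox_eq_app cox_eq.trans by blast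
  next
    assume "v \<in> cox_class n (a @ b)"
    then show "v \<in> {v. \<exists>a'\<in>cox_class n a. \<exists>b'\<in>cox_class n b. cox_eq n (a' @ b') v}"
      using cox_class_self[OF a] cox_class_self[OF b] unfolding cox_class_def by blast
  qed
  then have "{v. \<exists>a'\<in>cox_class n a. \<exists>b'\<in>cox_class n b. cox_eq n (a' @ b') v} = cox_class n (a @ b)"
    by blast
  then show ?thesis by (simp add: cox_group_def)
qed

lemma one_cox: "\<one>\<^bsub>cox_group n\<^esub> = cox_class n []" by (simp add: cox_group_def)

definition rep :: "nat list set \<Rightarrow> nat list" where "rep g = (SOME w. w \<in> g)"

lemma rep: assumes "g \<in> carrier (cox_group n)"
  shows "valid n (rep g)" "g = cox_class n (rep g)" "rep g \<in> g"
proof -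
  obtain w where w: "valid n w" "g = cox_class n w" using assms carrier_cox by blast
  then have "w \<in> g" by (simp add: cox_class_self)
  then show r: "rep g \<in> g" unfolding rep_def by (rule someI)
  then have "rep g \<in> cox_class n w" by (simp only: w(2))
  then have ce: "cox_eq n w (rep g)" by (simp add: cox_class_def)
  then show "valid n (rep g)" using cox_eq_valid by blast
  show "g = cox_class n (rep g)" using w(2) cox_class_eq[OF ce] by simp
qed

lemma group_cox: "group (cox_group n)"
proof (rule groupI)
  fix x y assume "x \<in> carrier (cox_group n)" "y \<in> carrier (cox_group n)"
  then show "x \<otimes>\<^bsub>cox_group n\<^esub> y \<in> carrier (cox_group n)"
    by (metis carrier_cox mult_class class_in_carrier le_sup_iff set_append)
next
  show "\<one>\<^bsub>cox_group n\<^esub> \<in> carrier (cox_group n)" by (simp add: one_cox)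
next
  fix x y z assume "x \<in> carrier (cox_group n)" "y \<in> carrier (cox_group n)" "z \<in> carrier (cox_group n)"
  then show "x \<otimes>\<^bsub>cox_group n\<^esub> y \<otimes>\<^bsub>cox_group n\<^esub> z = x \<otimes>\<^bsub>cox_group n\<^esub> (y \<otimes>\<^bsub>cox_group n\<^esub> z)"
    unfolding carrier_cox by (auto simp: mult_class)
next
  fix x assume "x \<in> carrier (cox_group n)"
  then show "\<one>\<^bsub>cox_group n\<^esub> \<otimes>\<^bsub>cox_group n\<^esub> x = x"
    unfolding carrier_cox by (auto simp: mult_class one_cox)
next
  fix x assume "x \<in> carrier (cox_group n)"
  then obtain w where w: "valid n w" "x = cox_class n w" unfolding carrier_cox by auto
  show "\<exists>y\<in>carrier (cox_group n). y \<otimes>\<^bsub>cox_group n\<^esub> x = \<one>\<^bsub>cox_group n\<^esub>"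
    apply (rule bexI[of _ "cox_class n (rev w)"])
    using w by (auto simp: mult_class one_cox cox_eq_rev' intro!: cox_class_eq)
qed



lemma wact_Nil[simp]: "wact adj [] x = x" by (simp add: wact_def)
lemma wact_Cons[simp]: "wact adj (i # w) x = adj i (wact adj w x)" by (simp add: wact_def)
lemma wact_append: "wact adj (u @ v) x = wact adj u (wact adj v x)" by (simp add: wact_def)

lemma wact_in: "premaniplex n F adj \<Longrightarrow> valid n w \<Longrightarrow> x \<in> F \<Longrightarrow> wact adj w x \<in> F"
  by (induction w) (auto simp: premaniplex_def)

lemma pm_comm:
  assumes P: "premaniplex n F adj" and ij: "i < n" "j < n" "i + 2 \<le> j \<or> j + 2 \<le> i" and y: "y \<in> F"
  shows "adj i (adj j y) = adj j (adj i y)"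
proof -
  have inv: "\<And>k z. k < n \<Longrightarrow> z \<in> F \<Longrightarrow> adj k z \<in> F \<and> adj k (adj k z) = z"
    using P by (auto simp: premaniplex_def)
  have c: "adj i (adj j (adj i (adj j y))) = y" using P ij y by (auto simp: premaniplex_def)
  define z where "z = adj i (adj j y)"
  have zF: "z \<in> F" using inv ij y by (simp add: z_def)
  have "adj i (adj j z) = y" using c z_def by simp
  then have "adj i (adj i (adj j z)) = adj i y" by simp
  then have "adj j z = adj i y" using inv zF ij by simp
  then have "adj j (adj j z) = adj j (adj i y)" by simp
  then show ?thesis using inv zF ij z_def by simp
qed

lemma wact_cox:
  assumes P: "premaniplex n F adj"
  shows "cox_eq n u v \<Longrightarrow> x \<in> F \<Longrightarrow> wact adj u x = wact adj v x"
proof (induction rule: cox_eq.induct)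
  case (cancel u v i)
  have "wact adj v x \<in> F" using wact_in[OF P] cancel by auto
  then show ?case using P cancel by (simp add: wact_append premaniplex_def)
next
  case (comm u v i j)
  have "wact adj v x \<in> F" using wact_in[OF P] comm by auto
  then have "adj i (adj j (wact adj v x)) = adj j (adj i (wact adj v x))"
    using comm by (intro pm_comm[OF P]) auto
  then show ?case by (simp add: wact_append)
qed auto

lemma cact_def2: "cact adj g x = wact adj (rep g) x" by (simp add: cact_def rep_def)

lemma cact_class:
  assumes P: "premaniplex n F adj" and w: "valid n w" and x: "x \<in> F"
  shows "cact adj (cox_class n w) x = wact adj w x"
proof -
  have "rep (cox_class n w) \<in> cox_class n w" using rep(3)[OF class_in_carrier[OF w]] .
  then have "cox_eq n w (rep (cox_class n w))" by (simp add: cox_class_def)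
  then show ?thesis using wact_cox[OF P] x cact_def2 by metis
qed

lemma cact_in: "premaniplex n F adj \<Longrightarrow> g \<in> carrier (cox_group n) \<Longrightarrow> x \<in> F \<Longrightarrow> cact adj g x \<in> F"
  by (simp add: cact_def2 rep(1) wact_in)

lemma cact_mult:
  assumes P: "premaniplex n F adj" and g: "g \<in> carrier (cox_group n)" and h: "h \<in> carrier (cox_group n)"
    and x: "x \<in> F"
  shows "cact adj (g \<otimes>\<^bsub>cox_group n\<^esub> h) x = cact adj g (cact adj h x)"
proof -
  have "g \<otimes>\<^bsub>cox_group n\<^esub> h = cox_class n (rep g @ rep h)"
    using rep[OF g] rep[OF h] mult_class by metis
  then have "cact adj (g \<otimes>\<^bsub>cox_group n\<^esub> h) x = wact adj (rep g @ rep h) x"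
    using cact_class[OF P _ x] rep[OF g] rep[OF h] by simp
  then show ?thesis by (simp add: wact_append cact_def2)
qed

lemma cact_one: "premaniplex n F adj \<Longrightarrow> x \<in> F \<Longrightarrow> cact adj \<one>\<^bsub>cox_group n\<^esub> x = x"
  using cact_class[where n=n and F=F and adj=adj and w="[]" and x=x] by (simp add: one_cox)

lemma cact_gen: "premaniplex n F adj \<Longrightarrow> i < n \<Longrightarrow> x \<in> F \<Longrightarrow> cact adj (cox_gen n i) x = adj i x"
  using cact_class[where n=n and F=F and adj=adj and w="[i]" and x=x] by (simp add: cox_gen_def)

lemma gen_carrier: "i < n \<Longrightarrow> cox_gen n i \<in> carrier (cox_group n)"
  by (simp add: cox_gen_def)

lemma eta_one:
  assumes Y: "premaniplex m FY adjY" and eta: "voltage_assignment n m FY adjY eta" and y: "y \<in> FY"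
  shows "eta y \<one>\<^bsub>cox_group m\<^esub> = \<one>\<^bsub>cox_group n\<^esub>"
proof -
  interpret Gm: group "cox_group m" by (rule group_cox)
  interpret Gn: group "cox_group n" by (rule group_cox)
  have e: "eta y \<one>\<^bsub>cox_group m\<^esub> \<in> carrier (cox_group n)" using eta y Gm.one_closed unfolding voltage_assignment_def by blast
  have "eta y (\<one>\<^bsub>cox_group m\<^esub> \<otimes>\<^bsub>cox_group m\<^esub> \<one>\<^bsub>cox_group m\<^esub>) =
        eta (cact adjY \<one>\<^bsub>cox_group m\<^esub> y) \<one>\<^bsub>cox_group m\<^esub> \<otimes>\<^bsub>cox_group n\<^esub> eta y \<one>\<^bsub>cox_group m\<^esub>"
    using eta y Gm.one_closed unfolding voltage_assignment_def by blast
  then have "eta y \<one>\<^bsub>cox_group m\<^esub> = eta y \<one>\<^bsub>cox_group m\<^esub> \<otimes>\<^bsub>cox_group n\<^esub> eta y \<one>\<^bsub>cox_group m\<^esub>"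
    using cact_one[OF Y y] by simp
  then show ?thesis using Gn.l_cancel_one[OF e e] by simp
qed

lemma vo_wact:
  assumes X: "premaniplex n FX adjX" and Y: "premaniplex m FY adjY"
    and eta: "voltage_assignment n m FY adjY eta"
    and w: "valid m w" and x: "x \<in> FX" and y: "y \<in> FY"
  shows "wact (vo_adj m adjX adjY eta) w (x, y) =
         (cact adjX (eta y (cox_class m w)) x, wact adjY w y)"
  using w
proof (induction w)
  case Nil
  have "cox_class m [] = \<one>\<^bsub>cox_group m\<^esub>" by (simp add: one_cox)
  then have "cact adjX (eta y (cox_class m [])) x = x"
    using eta_one[OF Y eta y] cact_one[OF X x] by simp
  then show ?case by simp
next
  case (Cons i w)
  have i: "i < m" and wv: "valid m w" using Cons.prems by auto
  have cw: "cox_class m w \<in> carrier (cox_group m)" using wv by simp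
  have gi: "cox_gen m i \<in> carrier (cox_group m)" using i by (rule gen_carrier)
  have cl: "cox_class m (i # w) = cox_gen m i \<otimes>\<^bsub>cox_group m\<^esub> cox_class m w"
    using mult_class[where n=m and a="[i]" and b=w] i wv by (simp add: cox_gen_def)
  have v: "eta y (cox_gen m i \<otimes>\<^bsub>cox_group m\<^esub> cox_class m w) =
    eta (cact adjY (cox_class m w) y) (cox_gen m i) \<otimes>\<^bsub>cox_group n\<^esub> eta y (cox_class m w)"
    using eta y cw gi unfolding voltage_assignment_def by blast
  have ca: "cact adjY (cox_class m w) y = wact adjY w y" using cact_class[OF Y wv y] .
  have wy: "wact adjY w y \<in> FY" using wact_in[OF Y wv y] .
  have e1: "eta (wact adjY w y) (cox_gen m i) \<in> carrier (cox_group n)"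
    using eta wy gi unfolding voltage_assignment_def by blast
  have e2: "eta y (cox_class m w) \<in> carrier (cox_group n)"
    using eta y cw unfolding voltage_assignment_def by blast
  have "wact (vo_adj m adjX adjY eta) (i # w) (x, y) =
     vo_adj m adjX adjY eta i (cact adjX (eta y (cox_class m w)) x, wact adjY w y)"
    using Cons.IH[OF wv] by simp
  also have "\<dots> = (cact adjX (eta (wact adjY w y) (cox_gen m i)) (cact adjX (eta y (cox_class m w)) x),
       adjY i (wact adjY w y))" by (simp add: vo_adj_def)
  also have "cact adjX (eta (wact adjY w y) (cox_gen m i)) (cact adjX (eta y (cox_class m w)) x)
     = cact adjX (eta (wact adjY w y) (cox_gen m i) \<otimes>\<^bsub>cox_group n\<^esub> eta y (cox_class m w)) x"
    using cact_mult[OF X e1 e2 x] by simp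
  also have "eta (wact adjY w y) (cox_gen m i) \<otimes>\<^bsub>cox_group n\<^esub> eta y (cox_class m w) = eta y (cox_class m (i # w))"
    using v ca cl by simp
  finally show ?case by simp
qed



definition enc :: "nat list set \<Rightarrow> nat" where "enc g = to_nat (rep g)"
definition uadj :: "nat \<Rightarrow> nat \<Rightarrow> nat \<Rightarrow> nat" where
  "uadj n i k = enc (cox_class n (i # from_nat k))"
definition FU :: "nat \<Rightarrow> nat set" where "FU n = enc ` carrier (cox_group n)"

lemma enc_inj: "g \<in> carrier (cox_group n) \<Longrightarrow> h \<in> carrier (cox_group n) \<Longrightarrow> enc g = enc h \<Longrightarrow> g = h"
  unfolding enc_def by (metis rep(2) to_nat_split)

lemma uadj_enc: assumes "i < n" "valid n w"
  shows "uadj n i (enc (cox_class n w)) = enc (cox_class n (i # w))"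
proof -
  have c: "cox_class n w \<in> carrier (cox_group n)" using assms by simp
  have "rep (cox_class n w) \<in> cox_class n w" using rep(3)[OF c] .
  then have "cox_eq n w (rep (cox_class n w))" by (simp add: cox_class_def)
  then have "cox_eq n ([i] @ w) ([i] @ rep (cox_class n w))" using assms by (intro cox_eq_left) auto
  then have "cox_class n (i # rep (cox_class n w)) = cox_class n (i # w)"
    using cox_class_eq cox_eq.sym by (metis append_Cons append_Nil)
  moreover have "uadj n i (enc (cox_class n w)) = enc (cox_class n (i # rep (cox_class n w)))"
    unfolding uadj_def enc_def by (simp only: from_nat_to_nat)
  ultimately show ?thesis by simp
qed

lemma wact_uadj: "valid n w \<Longrightarrow> valid n v \<Longrightarrow> wact (uadj n) w (enc (cox_class n v)) = enc (cox_class n (w @ v))"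
proof (induction w)
  case (Cons i w)
  then have "i < n" "valid n (w @ v)" by auto
  then show ?case using Cons by (simp add: uadj_enc)
qed simp

lemma FU_enc: "x \<in> FU n \<Longrightarrow> \<exists>v. valid n v \<and> x = enc (cox_class n v)"
proof -
  assume "x \<in> FU n"
  then obtain g where g: "g \<in> carrier (cox_group n)" "x = enc g" unfolding FU_def by blast
  have "enc g = enc (cox_class n (rep g))" using rep(2)[OF g(1)] by (rule arg_cong)
  then have "valid n (rep g) \<and> x = enc (cox_class n (rep g))" using rep(1)[OF g(1)] g(2) by simp
  then show ?thesis by (rule exI)
qed

lemma enc_FU: "valid n v \<Longrightarrow> enc (cox_class n v) \<in> FU n"
  unfolding FU_def by simp

lemma U_pm: "premaniplex n (FU n) (uadj n)"
  unfolding premaniplex_def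
proof (intro conjI allI impI ballI)
  fix i x assume i: "i < n" and x: "x \<in> FU n"
  obtain v where v: "valid n v" "x = enc (cox_class n v)" using FU_enc[OF x] by blast
  show "uadj n i x \<in> FU n" using v i by (simp add: uadj_enc enc_FU)
  have "cox_eq n ([] @ [i,i] @ v) ([] @ v)" using v i by (intro cox_eq.cancel) auto
  then show "uadj n i (uadj n i x) = x" using v i by (simp add: uadj_enc cox_class_eq)
next
  fix i j x assume i: "i < n" and j: "j < n" and ij: "i + 2 \<le> j \<or> j + 2 \<le> i" and x: "x \<in> FU n"
  obtain v where v: "valid n v" "x = enc (cox_class n v)" using FU_enc[OF x] by blast
  have 1: "cox_eq n ([i] @ [j,i] @ (j # v)) ([i] @ [i,j] @ (j # v))"
    using v i j ij by (intro cox_eq.comm) auto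
  have 2: "cox_eq n ([] @ [i,i] @ (j # j # v)) ([] @ (j # j # v))"
    using v i j by (intro cox_eq.cancel) auto
  have 3: "cox_eq n ([] @ [j,j] @ v) ([] @ v)"
    using v j by (intro cox_eq.cancel) auto
  have "cox_eq n (i # j # i # j # v) v" using 1 2 3 by (auto intro: cox_eq.trans)
  then show "uadj n i (uadj n j (uadj n i (uadj n j x))) = x"
    using v i j by (simp add: uadj_enc cox_class_eq)
qed

lemma U_conn: "pm_connected n (FU n) (uadj n)"
  unfolding pm_connected_def
proof (intro ballI)
  fix x y assume x: "x \<in> FU n" and y: "y \<in> FU n"
  obtain a where a: "valid n a" "x = enc (cox_class n a)" using FU_enc[OF x] by blast
  obtain b where b: "valid n b" "y = enc (cox_class n b)" using FU_enc[OF y] by blast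
  have "cox_eq n (b @ (rev a @ a)) (b @ [])" using a b cox_eq_rev' by (intro cox_eq_left) auto
  then have "wact (uadj n) (b @ rev a) x = y" using a b by (simp add: wact_uadj cox_class_eq)
  moreover have "valid n (b @ rev a)" using a b by auto
  ultimately show "\<exists>w. valid n w \<and> wact (uadj n) w x = y" by blast
qed

lemma U_univ: "g \<in> carrier (cox_group n) \<Longrightarrow> cact (uadj n) g (enc \<one>\<^bsub>cox_group n\<^esub>) = enc g"
  by (metis (no_types, lifting) U_pm append.right_neutral cact_class empty_subsetI enc_FU one_cox rep(1,2) set_empty wact_uadj)

lemma zeta_surj:
  assumes Y: "premaniplex m FY adjY" "y0 \<in> FY"
    and eta: "voltage_assignment n m FY adjY eta"
    and pc: "preserves_connectivity n m FY adjY eta"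
    and c: "c \<in> carrier (cox_group n)"
  shows "\<exists>\<omega>\<in>stab m adjY y0. eta y0 \<omega> = c"
proof -
  have con: "pm_connected m (FU n \<times> FY) (vo_adj m (uadj n) adjY eta)"
    using pc U_pm U_conn unfolding preserves_connectivity_def by blast
  have p: "(enc \<one>\<^bsub>cox_group n\<^esub>, y0) \<in> FU n \<times> FY" using Y by (simp add: one_cox enc_FU)
  have q: "(enc c, y0) \<in> FU n \<times> FY" using Y c by (simp add: FU_def)
  obtain w where w: "valid m w" and wq: "wact (vo_adj m (uadj n) adjY eta) w (enc \<one>\<^bsub>cox_group n\<^esub>, y0) = (enc c, y0)"
    using con p q unfolding pm_connected_def by blast
  have e1: "enc \<one>\<^bsub>cox_group n\<^esub> \<in> FU n" using p by simp
  have "(cact (uadj n) (eta y0 (cox_class m w)) (enc \<one>\<^bsub>cox_group n\<^esub>), wact adjY w y0) = (enc c, y0)"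
    using vo_wact[OF U_pm Y(1) eta w e1 Y(2)] wq by simp
  then have a: "cact (uadj n) (eta y0 (cox_class m w)) (enc \<one>\<^bsub>cox_group n\<^esub>) = enc c"
    and b: "wact adjY w y0 = y0" by auto
  have ec: "eta y0 (cox_class m w) \<in> carrier (cox_group n)"
    using eta Y w by (simp add: voltage_assignment_def)
  have "eta y0 (cox_class m w) = c" using a U_univ[OF ec] enc_inj[OF ec c] by simp
  moreover have "cox_class m w \<in> stab m adjY y0"
    using b cact_class[OF Y(1) w Y(2)] w by (simp add: stab_def)
  ultimately show ?thesis by blast
qed



lemma stab_subgroup:
  assumes Y: "premaniplex m FY adjY" "y0 \<in> FY"
  shows "subgroup (stab m adjY y0) (cox_group m)"
proof -
  interpret G: group "cox_group m" by (rule group_cox)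
  show ?thesis
  proof (rule G.subgroupI)
    show "stab m adjY y0 \<subseteq> carrier (cox_group m)" by (auto simp: stab_def)
    show "stab m adjY y0 \<noteq> {}" using cact_one[OF Y] G.one_closed by (auto simp: stab_def)
  next
    fix a assume a: "a \<in> stab m adjY y0"
    then have ac: "a \<in> carrier (cox_group m)" and ay: "cact adjY a y0 = y0" by (auto simp: stab_def)
    have "cact adjY (inv\<^bsub>cox_group m\<^esub> a) y0 = cact adjY (inv\<^bsub>cox_group m\<^esub> a) (cact adjY a y0)" using ay by simp
    also have "\<dots> = cact adjY (inv\<^bsub>cox_group m\<^esub> a \<otimes>\<^bsub>cox_group m\<^esub> a) y0"
      using cact_mult[OF Y(1) G.inv_closed[OF ac] ac Y(2)] by simp
    also have "\<dots> = y0" using ac cact_one[OF Y] by simp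
    finally show "inv\<^bsub>cox_group m\<^esub> a \<in> stab m adjY y0" using ac by (simp add: stab_def)
  next
    fix a b assume "a \<in> stab m adjY y0" "b \<in> stab m adjY y0"
    then show "a \<otimes>\<^bsub>cox_group m\<^esub> b \<in> stab m adjY y0"
      using cact_mult[OF Y(1) _ _ Y(2)] by (auto simp: stab_def)
  qed
qed

lemma (in group) inv_canc1: "x \<in> carrier G \<Longrightarrow> y \<in> carrier G \<Longrightarrow> x \<otimes> (inv x \<otimes> y) = y"
  by (simp add: m_assoc[symmetric])
lemma (in group) inv_canc2: "x \<in> carrier G \<Longrightarrow> y \<in> carrier G \<Longrightarrow> inv x \<otimes> (x \<otimes> y) = y"
  by (simp add: m_assoc[symmetric])

lemma conj_subgroup:
  assumes G: "group G" and H: "subgroup H G" and u: "u \<in> carrier G"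
  shows "subgroup (conj_sub G H u) G"
proof -
  interpret G: group G by (rule G)
  have Hc: "\<And>h. h \<in> H \<Longrightarrow> h \<in> carrier G" using H subgroup.subset by blast
  show ?thesis
  proof (rule G.subgroupI)
    show "conj_sub G H u \<subseteq> carrier G" using Hc u by (auto simp: conj_sub_def)
    show "conj_sub G H u \<noteq> {}" using subgroup.one_closed[OF H] by (auto simp: conj_sub_def)
  next
    fix a assume "a \<in> conj_sub G H u"
    then obtain l where l: "l \<in> H" "a = inv\<^bsub>G\<^esub> u \<otimes>\<^bsub>G\<^esub> l \<otimes>\<^bsub>G\<^esub> u" by (auto simp: conj_sub_def)
    have lc: "l \<in> carrier G" using Hc l by blast
    have "inv\<^bsub>G\<^esub> a = inv\<^bsub>G\<^esub> u \<otimes>\<^bsub>G\<^esub> inv\<^bsub>G\<^esub> l \<otimes>\<^bsub>G\<^esub> u"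
      using l lc u by (simp add: G.inv_mult_group G.m_assoc)
    moreover have "inv\<^bsub>G\<^esub> l \<in> H" using H l by (simp add: subgroup.m_inv_closed)
    ultimately show "inv\<^bsub>G\<^esub> a \<in> conj_sub G H u" by (auto simp: conj_sub_def)
  next
    fix a b assume "a \<in> conj_sub G H u" "b \<in> conj_sub G H u"
    then obtain l k where l: "l \<in> H" "a = inv\<^bsub>G\<^esub> u \<otimes>\<^bsub>G\<^esub> l \<otimes>\<^bsub>G\<^esub> u"
      and k: "k \<in> H" "b = inv\<^bsub>G\<^esub> u \<otimes>\<^bsub>G\<^esub> k \<otimes>\<^bsub>G\<^esub> u" by (auto simp: conj_sub_def)
    have lc: "l \<in> carrier G" "k \<in> carrier G" using Hc l k by blast+
    have "a \<otimes>\<^bsub>G\<^esub> b = inv\<^bsub>G\<^esub> u \<otimes>\<^bsub>G\<^esub> (l \<otimes>\<^bsub>G\<^esub> k) \<otimes>\<^bsub>G\<^esub> u"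
      using l k lc u by (simp add: G.m_assoc G.inv_canc1)
    moreover have "l \<otimes>\<^bsub>G\<^esub> k \<in> H" using H l k by (simp add: subgroup.m_closed)
    ultimately show "a \<otimes>\<^bsub>G\<^esub> b \<in> conj_sub G H u" by (auto simp: conj_sub_def)
  qed
qed

theorem lemma5p6:
  fixes n m :: nat
    and FX :: "'x set" and adjX :: "nat \<Rightarrow> 'x \<Rightarrow> 'x" and x0 :: 'x
    and FY :: "'y set" and adjY :: "nat \<Rightarrow> 'y \<Rightarrow> 'y" and y0 :: 'y
    and eta :: "'y \<Rightarrow> nat list set \<Rightarrow> nat list set"
    and \<upsilon> :: "nat list set"
  assumes X: "premaniplex n FX adjX" "pm_connected n FX adjX" "x0 \<in> FX"
    and Y: "premaniplex m FY adjY" "y0 \<in> FY"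
    and eta: "voltage_assignment n m FY adjY eta"
    and pc: "preserves_connectivity n m FY adjY eta"
    and ups: "\<upsilon> \<in> normalizer (cox_group m)
                 {\<omega> \<in> stab m adjY y0. eta y0 \<omega> \<in> stab n adjX x0}"
             "\<upsilon> \<notin> stab m adjY y0"
  shows "covers n FX adjX
           (coset_flags n (eta y0 ` (stab m adjY y0 \<inter> conj_sub (cox_group m) (stab m adjY y0) \<upsilon>)))
           (coset_adj n)"
proof -
  interpret Gm: group "cox_group m" by (rule group_cox)
  interpret Gn: group "cox_group n" by (rule group_cox)
  define L where "L = stab m adjY y0"
  define N where "N = stab n adjX x0"
  define S where "S = {\<omega> \<in> L. eta y0 \<omega> \<in> N}"
  define H where "H = L \<inter> conj_sub (cox_group m) L \<upsilon>"
  define K where "K = eta y0 ` H"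
  have Lsub: "subgroup L (cox_group m)" using stab_subgroup[OF Y] L_def by simp
  have Lc: "L \<subseteq> carrier (cox_group m)" using Lsub subgroup.subset by blast
  have Ly: "\<And>a. a \<in> L \<Longrightarrow> cact adjY a y0 = y0" by (simp add: L_def stab_def)
  have Sc: "S \<subseteq> carrier (cox_group m)" using Lc S_def by blast
  have nz: "\<upsilon> \<in> carrier (cox_group m) \<and> (\<lambda>H\<in>{H. H \<subseteq> carrier (cox_group m)}.
      \<upsilon> <#\<^bsub>cox_group m\<^esub> H #>\<^bsub>cox_group m\<^esub> inv\<^bsub>cox_group m\<^esub> \<upsilon>) S = S"
    using ups(1) unfolding normalizer_def stabilizer_def S_def L_def N_def by simp
  then have uc: "\<upsilon> \<in> carrier (cox_group m)"
    and uS: "\<upsilon> <#\<^bsub>cox_group m\<^esub> S #>\<^bsub>cox_group m\<^esub> inv\<^bsub>cox_group m\<^esub> \<upsilon> = S"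
    using Sc by auto
  have Hsub: "subgroup H (cox_group m)"
    unfolding H_def by (rule Gm.subgroups_Inter_pair[OF Lsub conj_subgroup[OF group_cox Lsub uc]])
  have HL: "H \<subseteq> L" by (auto simp: H_def)
  have etac: "\<And>\<omega>. \<omega> \<in> carrier (cox_group m) \<Longrightarrow> eta y0 \<omega> \<in> carrier (cox_group n)"
    using eta Y(2) unfolding voltage_assignment_def by blast
  have hom: "eta y0 (a \<otimes>\<^bsub>cox_group m\<^esub> b) = eta y0 a \<otimes>\<^bsub>cox_group n\<^esub> eta y0 b"
    if a: "a \<in> L" and b: "b \<in> L" for a b
  proof -
    have "eta y0 (a \<otimes>\<^bsub>cox_group m\<^esub> b) = eta (cact adjY b y0) a \<otimes>\<^bsub>cox_group n\<^esub> eta y0 b"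
      using eta Y(2) a b Lc unfolding voltage_assignment_def by blast
    then show ?thesis using Ly[OF b] by simp
  qed
  have e1: "eta y0 \<one>\<^bsub>cox_group m\<^esub> = \<one>\<^bsub>cox_group n\<^esub>" by (rule eta_one[OF Y(1) eta Y(2)])
  have Kc: "K \<subseteq> carrier (cox_group n)" using HL Lc etac K_def by blast
  have Ksub: "subgroup K (cox_group n)"
  proof (rule Gn.subgroupI)
    show "K \<subseteq> carrier (cox_group n)" by (rule Kc)
    show "K \<noteq> {}" using subgroup.one_closed[OF Hsub] K_def by blast
  next
    fix a assume "a \<in> K"
    then obtain h where h: "h \<in> H" "a = eta y0 h" by (auto simp: K_def)
    have hc: "h \<in> carrier (cox_group m)" using h HL Lc by blast
    have ih: "inv\<^bsub>cox_group m\<^esub> h \<in> H" using Hsub h by (simp add: subgroup.m_inv_closed)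
    have "eta y0 (inv\<^bsub>cox_group m\<^esub> h) \<otimes>\<^bsub>cox_group n\<^esub> eta y0 h = eta y0 (inv\<^bsub>cox_group m\<^esub> h \<otimes>\<^bsub>cox_group m\<^esub> h)"
      using hom ih h HL by auto
    also have "\<dots> = \<one>\<^bsub>cox_group n\<^esub>" using hc e1 by simp
    finally have "inv\<^bsub>cox_group n\<^esub> (eta y0 h) = eta y0 (inv\<^bsub>cox_group m\<^esub> h)"
      using Gn.inv_equality etac hc by simp
    then show "inv\<^bsub>cox_group n\<^esub> a \<in> K" using ih h K_def by simp
  next
    fix a b assume "a \<in> K" "b \<in> K"
    then obtain h k where h: "h \<in> H" "a = eta y0 h" and k: "k \<in> H" "b = eta y0 k" by (auto simp: K_def)
    have "a \<otimes>\<^bsub>cox_group n\<^esub> b = eta y0 (h \<otimes>\<^bsub>cox_group m\<^esub> k)" using hom h k HL by auto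
    moreover have "h \<otimes>\<^bsub>cox_group m\<^esub> k \<in> H" using Hsub h k by (simp add: subgroup.m_closed)
    ultimately show "a \<otimes>\<^bsub>cox_group n\<^esub> b \<in> K" by (simp add: K_def)
  qed
  have NK: "N \<subseteq> K"
  proof
    fix g assume g: "g \<in> N"
    then have gc: "g \<in> carrier (cox_group n)" by (simp add: N_def stab_def)
    obtain \<omega> where w: "\<omega> \<in> L" "eta y0 \<omega> = g" using zeta_surj[OF Y eta pc gc] L_def by blast
    have wS: "\<omega> \<in> S" using w g S_def by simp
    have wc: "\<omega> \<in> carrier (cox_group m)" using w Lc by blast
    have "\<upsilon> \<otimes>\<^bsub>cox_group m\<^esub> \<omega> \<otimes>\<^bsub>cox_group m\<^esub> inv\<^bsub>cox_group m\<^esub> \<upsilon> \<in>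
        \<upsilon> <#\<^bsub>cox_group m\<^esub> S #>\<^bsub>cox_group m\<^esub> inv\<^bsub>cox_group m\<^esub> \<upsilon>"
      using wS unfolding l_coset_def r_coset_def by blast
    then have c: "\<upsilon> \<otimes>\<^bsub>cox_group m\<^esub> \<omega> \<otimes>\<^bsub>cox_group m\<^esub> inv\<^bsub>cox_group m\<^esub> \<upsilon> \<in> L"
      using uS S_def by auto
    have "inv\<^bsub>cox_group m\<^esub> \<upsilon> \<otimes>\<^bsub>cox_group m\<^esub> (\<upsilon> \<otimes>\<^bsub>cox_group m\<^esub> \<omega> \<otimes>\<^bsub>cox_group m\<^esub> inv\<^bsub>cox_group m\<^esub> \<upsilon>) \<otimes>\<^bsub>cox_group m\<^esub> \<upsilon> = \<omega>"
      using uc wc by (simp add: Gm.m_assoc Gm.inv_canc2)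
    then have "\<omega> \<in> conj_sub (cox_group m) L \<upsilon>" using c unfolding conj_sub_def by force
    then have "\<omega> \<in> H" using w H_def by simp
    then show "g \<in> K" using w K_def by blast
  qed
  have reach: "\<exists>\<omega>\<in>carrier (cox_group n). cact adjX \<omega> x0 = x" if x: "x \<in> FX" for x
  proof -
    obtain w where w: "valid n w" "wact adjX w x0 = x" using X(2) X(3) x unfolding pm_connected_def by blast
    then show ?thesis using cact_class[OF X(1) w(1) X(3)] class_in_carrier[OF w(1)] by blast
  qed
  define phi where "phi x = (SOME \<omega>. \<omega> \<in> carrier (cox_group n) \<and> cact adjX \<omega> x0 = x) <#\<^bsub>cox_group n\<^esub> K" for x
  have phi_eq: "phi x = \<omega> <#\<^bsub>cox_group n\<^esub> K"
    if wc: "\<omega> \<in> carrier (cox_group n)" and wx: "cact adjX \<omega> x0 = x" for \<omega> x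
  proof -
    define \<omega>' where "\<omega>' = (SOME \<omega>. \<omega> \<in> carrier (cox_group n) \<and> cact adjX \<omega> x0 = x)"
    have "\<omega>' \<in> carrier (cox_group n) \<and> cact adjX \<omega>' x0 = x"
      unfolding \<omega>'_def by (rule someI[of _ \<omega>]) (use wc wx in simp)
    then have w'c: "\<omega>' \<in> carrier (cox_group n)" and w'x: "cact adjX \<omega>' x0 = x" by auto
    define k where "k = inv\<^bsub>cox_group n\<^esub> \<omega> \<otimes>\<^bsub>cox_group n\<^esub> \<omega>'"
    have kc: "k \<in> carrier (cox_group n)" using wc w'c k_def by simp
    have ic: "inv\<^bsub>cox_group n\<^esub> \<omega> \<in> carrier (cox_group n)" using wc by simp
    have "cact adjX k x0 = cact adjX (inv\<^bsub>cox_group n\<^esub> \<omega>) (cact adjX \<omega>' x0)"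
      unfolding k_def by (rule cact_mult[OF X(1) ic w'c X(3)])
    also have "\<dots> = cact adjX (inv\<^bsub>cox_group n\<^esub> \<omega>) (cact adjX \<omega> x0)" using w'x wx by simp
    also have "\<dots> = cact adjX (inv\<^bsub>cox_group n\<^esub> \<omega> \<otimes>\<^bsub>cox_group n\<^esub> \<omega>) x0"
      by (rule cact_mult[OF X(1) ic wc X(3), symmetric])
    also have "\<dots> = x0" using wc cact_one[OF X(1) X(3)] by simp
    finally have "k \<in> N" using kc by (simp add: N_def stab_def)
    then have kK: "k \<in> K" using NK by blast
    have "\<omega>' = \<omega> \<otimes>\<^bsub>cox_group n\<^esub> k" unfolding k_def using wc w'c by (simp add: Gn.inv_canc1)
    then have "\<omega>' \<in> \<omega> <#\<^bsub>cox_group n\<^esub> K" using kK unfolding l_coset_def by blast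
    then have "\<omega> <#\<^bsub>cox_group n\<^esub> K = \<omega>' <#\<^bsub>cox_group n\<^esub> K"
      by (rule Gn.l_repr_independence[OF _ wc Ksub])
    then show ?thesis unfolding phi_def \<omega>'_def[symmetric] by simp
  qed
  show ?thesis
    unfolding covers_def K_def[symmetric] H_def[symmetric] L_def[symmetric]
  proof (intro exI conjI ballI allI impI)
    show "phi ` FX = coset_flags n K"
    proof
      show "phi ` FX \<subseteq> coset_flags n K"
      proof
        fix c assume "c \<in> phi ` FX"
        then obtain x where x: "x \<in> FX" "c = phi x" by blast
        obtain \<omega> where "\<omega> \<in> carrier (cox_group n)" "cact adjX \<omega> x0 = x" using reach[OF x(1)] by blast
        then show "c \<in> coset_flags n K" using phi_eq x unfolding coset_flags_def by blast
      qed
    next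
      show "coset_flags n K \<subseteq> phi ` FX"
      proof
        fix c assume "c \<in> coset_flags n K"
        then obtain \<omega> where w: "\<omega> \<in> carrier (cox_group n)" "c = \<omega> <#\<^bsub>cox_group n\<^esub> K"
          unfolding coset_flags_def by blast
        have "cact adjX \<omega> x0 \<in> FX" using cact_in[OF X(1) w(1) X(3)] .
        moreover have "phi (cact adjX \<omega> x0) = c" using phi_eq[OF w(1) HOL.refl] w(2) by simp
        ultimately show "c \<in> phi ` FX" by blast
      qed
    qed
  next
    fix x i assume x: "x \<in> FX" and i: "i < n"
    obtain \<omega> where w: "\<omega> \<in> carrier (cox_group n)" "cact adjX \<omega> x0 = x" using reach[OF x] by blast
    have gc: "cox_gen n i \<in> carrier (cox_group n)" using i by (rule gen_carrier)
    have "cact adjX (cox_gen n i \<otimes>\<^bsub>cox_group n\<^esub> \<omega>) x0 = adjX i x"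
      using cact_mult[OF X(1) gc w(1) X(3)] cact_gen[OF X(1) i] w X(1) X(3) cact_in by metis
    then have "phi (adjX i x) = (cox_gen n i \<otimes>\<^bsub>cox_group n\<^esub> \<omega>) <#\<^bsub>cox_group n\<^esub> K"
      using phi_eq gc w(1) by simp
    also have "\<dots> = cox_gen n i <#\<^bsub>cox_group n\<^esub> (\<omega> <#\<^bsub>cox_group n\<^esub> K)"
      using Gn.lcos_m_assoc[OF Kc gc w(1)] by simp
    also have "\<dots> = coset_adj n i (phi x)" using phi_eq[OF w] by (simp add: coset_adj_def)
    finally show "phi (adjX i x) = coset_adj n i (phi x)" .
  qed
qed


end
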